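(* Let $\mathcal U$ be a non-principal p-point ultrafilter on $\omega$ and $\mathfrak I=\{\omega\setminus X\mid X\in\mathcal U\}$ its dual ideal. If the Grigorieff forcing $\mathbb P(\mathcal U)$ satisfies Axiom A, then player II has a winning strategy in the game $\mathcal G_{\mathcal U}$.
   Context: Grigorieff forcing: $\mathbb P(\mathcal U)=\{p:\omega\to 2\mid \mathrm{dom}(p)\in\mathfrak I\}$ (partial functions), ordered by $q\le p$ iff $q\supseteq p$. A partial order $(\mathbb P,\le)$ satisfies Axiom A if there are partial orders $\le_n$ ($n\in\omega$) on $\mathbb P$ such that: (i) $p\le_0 q$ implies $p\le q$; (ii) $p\le_{n+1}q$ implies $p\le_n q$; (iii) whenever $p_0\ge_0 p_1\ge_1 p_2\ge_2\cdots$, there is $q\in\mathbb P$ with $q\le_n p_n$ for all $n$; (iv) for every $p\in\mathbb P$, $n\in\omega$ and $\mathbb P$-name $\dot\alpha$ for an ordinal, there are $q\le_n p$ and a countable set $B$ with $q\Vdash\dot\alpha\in B$. The game $\mathcal G_{\mathcal U}$: in round $n$ player I plays $I_n\in\mathfrak I$ and player II responds with a finite $F_n\subseteq I_n$; player I's moves must form a partition $\{I_n\mid n\in\omega\}$ of $\omega$; player II wins iff $\bigcup_n F_n\in\mathcal U$. A p-point ultrafilter is a non-principal ultrafilter $\mathcal U$ on $\omega$ such that for every partition $\{J_n\}$ of $\omega$ with each $J_n\notin\mathcal U$ there is $Y\in\mathcal U$ with $|Y\cap J_n|<\omega$ for all $n$. *)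

theory Defs
  imports Main "HOL-Library.Countable_Set"
begin

definition ultrafilter_on_nat :: "nat set set \<Rightarrow> bool" where
  "ultrafilter_on_nat U \<longleftrightarrow>
     UNIV \<in> U \<and> {} \<notin> U \<and>
     (\<forall>X Y. X \<in> U \<and> X \<subseteq> Y \<longrightarrow> Y \<in> U) \<and>
     (\<forall>X Y. X \<in> U \<and> Y \<in> U \<longrightarrow> X \<inter> Y \<in> U) \<and>
     (\<forall>X. X \<in> U \<or> - X \<in> U)"

definition nonprincipal :: "nat set set \<Rightarrow> bool" where
  "nonprincipal U \<longleftrightarrow> (\<forall>x. {x} \<notin> U)"

text \<open>An indexed partition of omega (pieces may be empty).\<close>
definition is_partition :: "(nat \<Rightarrow> nat set) \<Rightarrow> bool" where
  "is_partition J \<longleftrightarrow> (\<forall>m n. m \<noteq> n \<longrightarrow> J m \<inter> J n = {}) \<and> (\<Union>n. J n) = UNIV"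

definition p_point :: "nat set set \<Rightarrow> bool" where
  "p_point U \<longleftrightarrow> ultrafilter_on_nat U \<and> nonprincipal U \<and>
     (\<forall>J. is_partition J \<and> (\<forall>n. J n \<notin> U) \<longrightarrow>
        (\<exists>Y\<in>U. \<forall>n. finite (Y \<inter> J n)))"

definition dual_ideal :: "nat set set \<Rightarrow> nat set set" where
  "dual_ideal U = {- X | X. X \<in> U}"

definition grigorieff :: "nat set set \<Rightarrow> (nat \<rightharpoonup> bool) set" where
  "grigorieff U = {p. dom p \<in> dual_ideal U}"

definition grig_le :: "(nat \<rightharpoonup> bool) \<Rightarrow> (nat \<rightharpoonup> bool) \<Rightarrow> bool" where
  "grig_le q p \<longleftrightarrow> p \<subseteq>\<^sub>m q"

definition partial_order_on_set :: "'p set \<Rightarrow> ('p \<Rightarrow> 'p \<Rightarrow> bool) \<Rightarrow> bool" where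
  "partial_order_on_set P r \<longleftrightarrow>
     (\<forall>p\<in>P. r p p) \<and>
     (\<forall>p\<in>P. \<forall>q\<in>P. r p q \<and> r q p \<longrightarrow> p = q) \<and>
     (\<forall>p\<in>P. \<forall>q\<in>P. \<forall>s\<in>P. r p q \<and> r q s \<longrightarrow> r p s)"

definition compatible :: "'p set \<Rightarrow> ('p \<Rightarrow> 'p \<Rightarrow> bool) \<Rightarrow> 'p \<Rightarrow> 'p \<Rightarrow> bool" where
  "compatible P le a b \<longleftrightarrow> (\<exists>r\<in>P. le r a \<and> le r b)"

definition maximal_antichain :: "'p set \<Rightarrow> ('p \<Rightarrow> 'p \<Rightarrow> bool) \<Rightarrow> 'p set \<Rightarrow> bool" where
  "maximal_antichain P le A \<longleftrightarrow> A \<subseteq> P \<and>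
     (\<forall>a\<in>A. \<forall>b\<in>A. a \<noteq> b \<longrightarrow> \<not> compatible P le a b) \<and>
     (\<forall>p\<in>P. \<exists>a\<in>A. compatible P le p a)"

text \<open>A (nice) name for an ordinal: a maximal antichain A together with the values
  f a decided by its members.  Values are taken in the type of conditions, which is
  large enough to separate all members of any antichain.\<close>
definition ordinal_name :: "'p set \<Rightarrow> ('p \<Rightarrow> 'p \<Rightarrow> bool) \<Rightarrow> 'p set \<Rightarrow> ('p \<Rightarrow> 'v) \<Rightarrow> bool" where
  "ordinal_name P le A f \<longleftrightarrow> maximal_antichain P le A"

definition forces_in :: "'p set \<Rightarrow> ('p \<Rightarrow> 'p \<Rightarrow> bool) \<Rightarrow> 'p \<Rightarrow> 'p set \<Rightarrow> ('p \<Rightarrow> 'v) \<Rightarrow> 'v set \<Rightarrow> bool" where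
  "forces_in P le q A f B \<longleftrightarrow>
     (\<forall>r\<in>P. le r q \<longrightarrow> (\<exists>s\<in>P. le s r \<and> (\<exists>a\<in>A. le s a \<and> f a \<in> B)))"

definition axiom_A :: "'p set \<Rightarrow> ('p \<Rightarrow> 'p \<Rightarrow> bool) \<Rightarrow> bool" where
  "axiom_A P le \<longleftrightarrow> (\<exists>len :: nat \<Rightarrow> 'p \<Rightarrow> 'p \<Rightarrow> bool.
     (\<forall>n. partial_order_on_set P (len n)) \<and>
     (\<forall>p\<in>P. \<forall>q\<in>P. len 0 p q \<longrightarrow> le p q) \<and>
     (\<forall>n. \<forall>p\<in>P. \<forall>q\<in>P. len (Suc n) p q \<longrightarrow> len n p q) \<and>
     (\<forall>s. (\<forall>n. s n \<in> P \<and> len n (s (Suc n)) (s n)) \<longrightarrow>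
          (\<exists>q\<in>P. \<forall>n. len n q (s n))) \<and>
     (\<forall>p\<in>P. \<forall>n. \<forall>A (f :: 'p \<Rightarrow> 'p). ordinal_name P le A f \<longrightarrow>
          (\<exists>q\<in>P. len n q p \<and> (\<exists>B. countable B \<and> forces_in P le q A f B))))"

text \<open>A strategy for II maps the history of I's moves (I_0,...,I_n) to F_n,
  a finite subset of I_n.\<close>
definition strategy_II :: "(nat set list \<Rightarrow> nat set) \<Rightarrow> bool" where
  "strategy_II \<sigma> \<longleftrightarrow> (\<forall>xs. xs \<noteq> [] \<longrightarrow> finite (\<sigma> xs) \<and> \<sigma> xs \<subseteq> last xs)"

definition winning_II :: "nat set set \<Rightarrow> (nat set list \<Rightarrow> nat set) \<Rightarrow> bool" where
  "winning_II U \<sigma> \<longleftrightarrow> strategy_II \<sigma> \<and>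
     (\<forall>I :: nat \<Rightarrow> nat set. (\<forall>n. I n \<in> dual_ideal U) \<and> is_partition I \<longrightarrow>
        (\<Union>n. \<sigma> (map I [0..<Suc n])) \<in> U)"

end

theory Submission
  imports Defs
begin

lemma pow_uncountable:
  assumes "infinite (D::nat set)"
  shows "uncountable (Pow D)"
proof
  assume c: "countable (Pow D)"
  have ne: "Pow D \<noteq> {}" by auto
  define g where "g = from_nat_into (Pow D)"
  have rg: "range g = Pow D" using range_from_nat_into[OF ne c] g_def by simp
  obtain e :: "nat \<Rightarrow> nat" where e: "inj e" "range e \<subseteq> D"
    using infinite_countable_subset[OF assms] by blast
  define S where "S = {e n |n. e n \<notin> g n}"
  have "S \<in> Pow D" using e(2) S_def by auto
  then obtain m where m: "S = g m" using rg by (metis imageE)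
  show False
  proof (cases "e m \<in> S")
    case True
    then obtain n where "e m = e n" "e n \<notin> g n" using S_def by auto
    then show False using e(1) m True by (metis injD)
  next
    case False
    then show False using m S_def by auto
  qed
qed

primrec seqc :: "(nat \<Rightarrow> 'a \<Rightarrow> nat set \<Rightarrow> 'a) \<Rightarrow> 'a \<Rightarrow> (nat \<Rightarrow> nat set) \<Rightarrow> nat \<Rightarrow> 'a" where
  "seqc st z J 0 = z"
| "seqc st z J (Suc k) = st k (seqc st z J k) (J k)"

lemma seqc_cong: "(\<forall>k<n. J k = J' k) \<Longrightarrow> seqc st z J n = seqc st z J' n"
  by (induction n) auto

lemma ideal_union:
  assumes "ultrafilter_on_nat U" "A \<in> dual_ideal U" "B \<in> dual_ideal U"
  shows "A \<union> B \<in> dual_ideal U"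
proof -
  obtain X Y where XY: "A = - X" "B = - Y" "X \<in> U" "Y \<in> U" using assms(2,3) unfolding dual_ideal_def by auto
  have int: "\<forall>X Y. X \<in> U \<and> Y \<in> U \<longrightarrow> X \<inter> Y \<in> U" using assms(1) unfolding ultrafilter_on_nat_def by blast
  have "X \<inter> Y \<in> U" using int XY by blast
  moreover have "A \<union> B = - (X \<inter> Y)" using XY by blast
  ultimately show ?thesis unfolding dual_ideal_def by blast
qed

lemma ideal_subset:
  assumes "ultrafilter_on_nat U" "A \<in> dual_ideal U" "B \<subseteq> A"
  shows "B \<in> dual_ideal U"
proof -
  obtain X where X: "A = - X" "X \<in> U" using assms(2) unfolding dual_ideal_def by auto
  have up: "\<forall>X Y. X \<in> U \<and> X \<subseteq> Y \<longrightarrow> Y \<in> U" using assms(1) unfolding ultrafilter_on_nat_def by blast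
  have "X \<subseteq> - B" using X assms(3) by blast
  then have "- B \<in> U" using up X(2) by blast
  moreover have "B = - (- B)" by simp
  ultimately show ?thesis unfolding dual_ideal_def by blast
qed

lemma step_exists:
  fixes len :: "nat \<Rightarrow> (nat \<rightharpoonup> bool) \<Rightarrow> (nat \<rightharpoonup> bool) \<Rightarrow> bool"
  assumes uf: "ultrafilter_on_nat U"
    and ax: "\<forall>p\<in>grigorieff U. \<forall>n. \<forall>A (f :: (nat \<rightharpoonup> bool) \<Rightarrow> (nat \<rightharpoonup> bool)).
        ordinal_name (grigorieff U) grig_le A f \<longrightarrow>
          (\<exists>q\<in>grigorieff U. len n q p \<and> (\<exists>B. countable B \<and> forces_in (grigorieff U) grig_le q A f B))"
    and p: "p \<in> grigorieff U" and I: "I \<in> dual_ideal U"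
  shows "\<exists>q\<in>grigorieff U. len n q p \<and> finite (I - dom q)"
proof -
  let ?P = "grigorieff U"
  define A where "A = {r :: nat \<rightharpoonup> bool. dom r = dom p \<union> I}"
  have dPI: "dom p \<union> I \<in> dual_ideal U" using ideal_union[OF uf] p I unfolding grigorieff_def by auto
  have "maximal_antichain ?P grig_le A"
    unfolding maximal_antichain_def
  proof (intro conjI ballI impI)
    show "A \<subseteq> ?P" using dPI unfolding A_def grigorieff_def by auto
  next
    fix a b assume ab: "a \<in> A" "b \<in> A" "a \<noteq> b"
    show "\<not> compatible ?P grig_le a b"
    proof
      assume "compatible ?P grig_le a b"
      then obtain r where r: "a \<subseteq>\<^sub>m r" "b \<subseteq>\<^sub>m r" unfolding compatible_def grig_le_def by auto
      have "a = b"
      proof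
        fix x show "a x = b x"
        proof (cases "x \<in> dom a")
          case True
          then have "x \<in> dom b" using ab unfolding A_def by auto
          then show ?thesis using True r unfolding map_le_def by auto
        next
          case False
          then have "x \<notin> dom b" using ab unfolding A_def by auto
          then show ?thesis using False by auto
        qed
      qed
      then show False using ab by simp
    qed
  next
    fix p' assume p': "p' \<in> ?P"
    define r where "r = (\<lambda>x. if x \<in> dom p \<union> I then (case p' x of Some b \<Rightarrow> Some b | None \<Rightarrow> Some True) else None)"
    have rA: "r \<in> A" unfolding A_def r_def dom_def by (auto split: option.splits)
    have d: "dom (r ++ p') = (dom p \<union> I) \<union> dom p'" using rA unfolding A_def by auto
    have "r ++ p' \<in> ?P" unfolding grigorieff_def using d ideal_union[OF uf dPI] p' unfolding grigorieff_def by auto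
    moreover have "p' \<subseteq>\<^sub>m r ++ p'" by (rule map_le_map_add)
    moreover have "r \<subseteq>\<^sub>m r ++ p'" unfolding map_le_def r_def map_add_def
      by (auto split: option.splits if_splits)
    ultimately show "\<exists>a\<in>A. compatible ?P grig_le p' a"
      using rA unfolding compatible_def grig_le_def by blast
  qed
  then have "ordinal_name ?P grig_le A id" unfolding ordinal_name_def by simp
  then obtain q B where q: "q \<in> ?P" "len n q p" "countable B" "forces_in ?P grig_le q A id B"
    using ax p by blast
  have "finite (I - dom q)"
  proof (rule ccontr)
    assume inf: "infinite (I - dom q)"
    define D where "D = I - dom q"
    define \<phi> where "\<phi> = (\<lambda>a :: nat \<rightharpoonup> bool. {x \<in> D. a x = Some True})"
    have "Pow D \<subseteq> \<phi> ` B"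
    proof
      fix S assume S: "S \<in> Pow D"
      define rh where "rh = q ++ (\<lambda>x. if x \<in> D then Some (x \<in> S) else None)"
      have drh: "dom rh \<subseteq> dom q \<union> I" unfolding rh_def D_def by (auto split: if_splits)
      have "dom q \<union> I \<in> dual_ideal U" using ideal_union[OF uf] q(1) I unfolding grigorieff_def by auto
      then have rhP: "rh \<in> ?P" using ideal_subset[OF uf _ drh] unfolding grigorieff_def by auto
      have "q \<subseteq>\<^sub>m rh" unfolding rh_def map_le_def map_add_def D_def by (auto split: option.splits)
      then obtain s a where s: "s \<in> ?P" "rh \<subseteq>\<^sub>m s" "a \<in> A" "a \<subseteq>\<^sub>m s" "a \<in> B"
        using q(4) rhP unfolding forces_in_def grig_le_def by auto
      have "\<phi> a = S"
      proof -
        have "a x = Some (x \<in> S)" if "x \<in> D" for x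
        proof -
          have "x \<in> dom a" using that s(3) unfolding A_def D_def by auto
          then have "a x = s x" using s(4) unfolding map_le_def by auto
          moreover have "rh x = Some (x \<in> S)" using that unfolding rh_def by auto
          moreover then have "s x = rh x" using s(2) unfolding map_le_def by (metis domI)
          ultimately show ?thesis by simp
        qed
        then show ?thesis unfolding \<phi>_def using S by auto
      qed
      then show "S \<in> \<phi> ` B" using s(5) by blast
    qed
    then have "countable (Pow D)" using q(3) countable_subset by blast
    then show False using pow_uncountable inf D_def by blast
  qed
  then show ?thesis using q by blast
qed

theorem lemma1:
  fixes U :: "nat set set"
  assumes "p_point U"
    and "axiom_A (grigorieff U) grig_le"
  shows "\<exists>\<sigma>. winning_II U \<sigma>"
proof -
  let ?P = "grigorieff U"
  have uf: "ultrafilter_on_nat U" using assms(1) unfolding p_point_def by simp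
  have uf_up: "\<forall>X Y. X \<in> U \<and> X \<subseteq> Y \<longrightarrow> Y \<in> U" using uf unfolding ultrafilter_on_nat_def by blast
  obtain len :: "nat \<Rightarrow> (nat \<rightharpoonup> bool) \<Rightarrow> (nat \<rightharpoonup> bool) \<Rightarrow> bool" where
    L1: "\<forall>p\<in>?P. \<forall>q\<in>?P. len 0 p q \<longrightarrow> grig_le p q" and
    L2: "\<forall>n. \<forall>p\<in>?P. \<forall>q\<in>?P. len (Suc n) p q \<longrightarrow> len n p q" and
    L3: "\<forall>s. (\<forall>n. s n \<in> ?P \<and> len n (s (Suc n)) (s n)) \<longrightarrow> (\<exists>q\<in>?P. \<forall>n. len n q (s n))" and
    L4: "\<forall>p\<in>?P. \<forall>n. \<forall>A (f :: (nat \<rightharpoonup> bool) \<Rightarrow> (nat \<rightharpoonup> bool)). ordinal_name ?P grig_le A f \<longrightarrow>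
          (\<exists>q\<in>?P. len n q p \<and> (\<exists>B. countable B \<and> forces_in ?P grig_le q A f B))"
    using assms(2) unfolding axiom_A_def by blast
  have Ln: "len n p q \<Longrightarrow> p \<in> ?P \<Longrightarrow> q \<in> ?P \<Longrightarrow> grig_le p q" for n p q
    by (induction n) (use L1 L2 in blast)+
  define st where "st = (\<lambda>k p I. if p \<in> ?P \<and> I \<in> dual_ideal U
      then (SOME q. q \<in> ?P \<and> len k q p \<and> finite (I - dom q)) else p)"
  have st: "st k p I \<in> ?P \<and> len k (st k p I) p \<and> finite (I - dom (st k p I))"
    if "p \<in> ?P" "I \<in> dual_ideal U" for k p I
  proof -
    have "\<exists>q. q \<in> ?P \<and> len k q p \<and> finite (I - dom q)"
      using step_exists[OF uf L4 that] by blast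
    then have "(SOME q. q \<in> ?P \<and> len k q p \<and> finite (I - dom q)) \<in> ?P \<and>
      len k (SOME q. q \<in> ?P \<and> len k q p \<and> finite (I - dom q)) p \<and>
      finite (I - dom (SOME q. q \<in> ?P \<and> len k q p \<and> finite (I - dom q)))"
      by (rule someI_ex)
    then show ?thesis unfolding st_def using that by simp
  qed
  have "UNIV \<in> U" using uf unfolding ultrafilter_on_nat_def by blast
  then have emp: "Map.empty \<in> ?P"
    unfolding grigorieff_def dual_ideal_def by (simp add: exI[of _ UNIV])
  define \<sigma> where "\<sigma> = (\<lambda>xs. let q = seqc st Map.empty (\<lambda>k. xs ! k) (length xs) in
      if finite (last xs - dom q) then last xs - dom q else {})"
  have "winning_II U \<sigma>"
    unfolding winning_II_def
  proof (intro conjI allI impI)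
    show "strategy_II \<sigma>" unfolding strategy_II_def \<sigma>_def Let_def by auto
  next
    fix I :: "nat \<Rightarrow> nat set"
    assume a: "(\<forall>n. I n \<in> dual_ideal U) \<and> is_partition I"
    define s where "s = seqc st Map.empty I"
    have sP: "s n \<in> ?P \<and> len n (s (Suc n)) (s n) \<and> finite (I n - dom (s (Suc n)))" for n
    proof (induction n)
      case 0
      then show ?case using st[OF emp] a emp unfolding s_def by simp
    next
      case (Suc n)
      then show ?case using st a unfolding s_def by simp
    qed
    have sig: "\<sigma> (map I [0..<Suc n]) = I n - dom (s (Suc n))" for n
    proof -
      have "seqc st Map.empty (\<lambda>k. map I [0..<Suc n] ! k) (Suc n) = s (Suc n)"
        unfolding s_def by (rule seqc_cong) (simp del: upt_Suc)
      moreover have "last (map I [0..<Suc n]) = I n" by simp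
      ultimately show ?thesis unfolding \<sigma>_def Let_def using sP[of n] by (simp del: upt_Suc)
    qed
    obtain q where q: "q \<in> ?P" "\<forall>n. len n q (s n)" using L3 sP by blast
    have sub: "dom (s n) \<subseteq> dom q" for n
      using Ln[of n q "s n"] q sP[of n] unfolding grig_le_def by (simp add: map_le_implies_dom_le)
    obtain X where X: "dom q = - X" "X \<in> U" using q(1) unfolding grigorieff_def dual_ideal_def by auto
    have "X \<subseteq> (\<Union>n. \<sigma> (map I [0..<Suc n]))"
    proof
      fix x assume "x \<in> X"
      then have xq: "x \<notin> dom q" using X by auto
      have "x \<in> (\<Union>n. I n)" using a unfolding is_partition_def by simp
      then obtain n where "x \<in> I n" by blast
      then have "x \<in> \<sigma> (map I [0..<Suc n])" using xq sub[of "Suc n"] unfolding sig[of n] by blast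
      then show "x \<in> (\<Union>n. \<sigma> (map I [0..<Suc n]))" by blast
    qed
    then show "(\<Union>n. \<sigma> (map I [0..<Suc n])) \<in> U" using X(2) uf_up by (metis (no_types, lifting))
  qed
  then show ?thesis by blast
qed

end
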